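(* Let $X$ be a nonempty Polish space and, for $n\in\omega$, let $D_n,R_n$ be dense $G_\delta$ subsets of some open subsets of $X$ and $f_n:D_n\to R_n$ a continuous, open and onto map. Assume $\Delta(X)\subseteq\overline{A^f}\setminus A^f$, where $A^f=\bigcup_n\mathrm{Graph}(f_n)$. Then $(X,A^f)$ is a digraph of uncountable Borel chromatic number.
   Context: $\Delta(X)$ is the diagonal of $X$. A digraph on $X$ is a relation disjoint from $\Delta(X)$. The Borel chromatic number of a digraph $A$ on Polish $X$ is the least cardinality of a Polish $Y$ admitting a Borel $c:X\to Y$ with $c(x)\neq c(x')$ for $(x,x')\in A$; it is uncountable iff there is no Borel $c:X\to\omega$ with this property. *)

theory Defs
  imports "HOL-Analysis.Analysis"
begin

definition graph_of :: "'a set \<Rightarrow> ('a \<Rightarrow> 'b) \<Rightarrow> ('a \<times> 'b) set" where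
  "graph_of D f = {(x, f x) | x. x \<in> D}"

definition diag :: "('a \<times> 'a) set" where
  "diag = {(x, x) | x. True}"

end

theory Submission
  imports Defs
begin

definition dns :: "'a::topological_space set \<Rightarrow> bool" where
  "dns G \<longleftrightarrow> open G \<and> (\<forall>P. open P \<longrightarrow> P \<noteq> {} \<longrightarrow> P \<inter> G \<noteq> {})"

definition meager :: "'a::topological_space set \<Rightarrow> bool" where
  "meager M \<longleftrightarrow> (\<exists>\<G>. countable \<G> \<and> (\<forall>G\<in>\<G>. dns G) \<and> M \<inter> \<Inter>\<G> = {})"

lemma meets_closure:
  assumes "open S" "S \<noteq> {}" "S \<subseteq> closure R" shows "S \<inter> R \<noteq> {}"
proof
  assume "S \<inter> R = {}"
  then have "S \<inter> closure R = {}" using open_Int_closure_eq_empty[OF assms(1)] by blast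
  then show False using assms(2,3) by blast
qed

lemma dns_closure: "dns G \<Longrightarrow> closure G = UNIV"
proof (rule ccontr)
  assume d: "dns G" and "closure G \<noteq> UNIV"
  then have "open (- closure G)" "- closure G \<noteq> {}" by auto
  with d have "(- closure G) \<inter> G \<noteq> {}" by (auto simp: dns_def)
  then show False using closure_subset[of G] by blast
qed

lemma baire:
  fixes \<G> :: "'a::polish_space set set"
  assumes "countable \<G>" "\<And>G. G \<in> \<G> \<Longrightarrow> dns G" "open P" "P \<noteq> {}"
  shows "P \<inter> \<Inter>\<G> \<noteq> {}"
proof -
  have "euclidean closure_of \<Inter>\<G> = topspace euclidean"
  proof (rule Baire_category)
    show "completely_metrizable_space (euclidean::'a topology) \<or> locally_compact_space (euclidean::'a topology) \<and> regular_space (euclidean::'a topology)"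
      using completely_metrizable_space_euclidean by blast
    show "countable \<G>" by (rule assms(1))
    fix T assume T: "T \<in> \<G>"
    have "open T" using assms(2)[OF T] unfolding dns_def by blast
    moreover have "closure T = UNIV" using dns_closure[OF assms(2)[OF T]] .
    ultimately show "openin euclidean T \<and> euclidean closure_of T = topspace euclidean" by simp
  qed
  then have "closure (\<Inter>\<G>) = UNIV" by simp
  then show ?thesis using meets_closure[OF assms(3,4)] by auto
qed

lemma meager_mono:
  assumes "meager N" "M \<subseteq> N" shows "meager M"
proof -
  obtain \<G> where g: "countable \<G>" "\<forall>G\<in>\<G>. dns G" "N \<inter> \<Inter>\<G> = {}"
    using assms(1) unfolding meager_def by auto
  have "M \<inter> \<Inter>\<G> = {}" using g(3) assms(2) by auto
  then show "meager M" unfolding meager_def using g(1,2) by auto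
qed

lemma meager_Union:
  assumes "\<And>i::nat. meager (M i)" shows "meager (\<Union>i. M i)"
proof -
  from assms obtain G where G: "\<And>i. countable (G i) \<and> (\<forall>g\<in>G i. dns g) \<and> M i \<inter> \<Inter>(G i) = {}"
    unfolding meager_def by metis
  have "countable (\<Union>i. G i)" using G by auto
  moreover have "\<forall>g\<in>(\<Union>i. G i). dns g" using G by auto
  moreover have "(\<Union>i. M i) \<inter> \<Inter>(\<Union>i. G i) = {}"
  proof -
    have "M i \<inter> \<Inter>(\<Union>i. G i) = {}" for i using G[of i] by auto
    then show ?thesis by auto
  qed
  ultimately show ?thesis unfolding meager_def by auto
qed

lemma meager_Un: "meager M \<Longrightarrow> meager N \<Longrightarrow> meager (M \<union> N)"
  unfolding meager_def
proof (elim exE conjE)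
  fix G H assume "countable G" "\<forall>g\<in>G. dns g" "M \<inter> \<Inter> G = {}" "countable H" "\<forall>g\<in>H. dns g" "N \<inter> \<Inter> H = {}"
  then show "\<exists>\<G>. countable \<G> \<and> (\<forall>G\<in>\<G>. dns G) \<and> (M \<union> N) \<inter> \<Inter> \<G> = {}"
    by (intro exI[of _ "G \<union> H"]) auto
qed

lemma meager_frontier:
  assumes "open U" shows "meager (closure U - U)"
  unfolding meager_def
proof (intro exI[of _ "{U \<union> - closure U}"] conjI)
  show "\<forall>G\<in>{U \<union> - closure U}. dns G"
  proof
    fix G assume "G \<in> {U \<union> - closure U}"
    then have G: "G = U \<union> - closure U" by simp
    show "dns G" unfolding dns_def
    proof (intro conjI allI impI)
      show "open G" using G assms by auto
      fix P :: "'a set" assume P: "open P" "P \<noteq> {}"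
      show "P \<inter> G \<noteq> {}"
      proof
        assume "P \<inter> G = {}"
        then have a: "P \<inter> U = {}" "P \<subseteq> closure U" using G by auto
        then have "P \<inter> closure U = {}" using open_Int_closure_eq_empty[OF P(1)] by blast
        then show False using a(2) P(2) by blast
      qed
    qed
  qed
qed auto

definition bp :: "'a::topological_space set \<Rightarrow> bool" where
  "bp B \<longleftrightarrow> (\<exists>U. open U \<and> meager ((B - U) \<union> (U - B)))"

lemma bp_sigma: "B \<in> sigma_sets UNIV {S. open S} \<Longrightarrow> bp B"
proof (induction rule: sigma_sets.induct)
  case (Basic a)
  then show ?case unfolding bp_def meager_def by (intro exI[of _ a]) auto
next
  case Empty
  then show ?case unfolding bp_def meager_def by (intro exI[of _ "{}"]) auto
next
  case (Compl a)
  then obtain U where U: "open U" "meager ((a - U) \<union> (U - a))" unfolding bp_def by blast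
  have s: "((UNIV - a) - (- closure U)) \<union> ((- closure U) - (UNIV - a)) \<subseteq> ((a - U) \<union> (U - a)) \<union> (closure U - U)"
    using closure_subset[of U] by auto
  have m: "meager (((a - U) \<union> (U - a)) \<union> (closure U - U))"
    using meager_Un[OF U(2) meager_frontier[OF U(1)]] .
  have o: "open (- closure U)" by auto
  show ?case unfolding bp_def using meager_mono[OF m s] o by blast
next
  case (Union a)
  then obtain U where U: "\<And>i. open (U i) \<and> meager ((a i - U i) \<union> (U i - a i))"
    unfolding bp_def by metis
  have s: "((\<Union>i. a i) - (\<Union>i. U i)) \<union> ((\<Union>i. U i) - (\<Union>i. a i)) \<subseteq> (\<Union>i. (a i - U i) \<union> (U i - a i))"
    by blast
  have m: "meager (\<Union>i. (a i - U i) \<union> (U i - a i))"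
    using U by (intro meager_Union) blast
  have o: "open (\<Union>i. U i)" using U by auto
  show ?case unfolding bp_def using meager_mono[OF m s] o by blast
qed


lemma main_contra:
  fixes D R :: "'a::polish_space set" and g :: "'a \<Rightarrow> 'a"
  assumes Op: "open Op" "D \<subseteq> Op" "Op \<subseteq> closure D" and gd: "gdelta_in euclidean D"
      and V: "open V" "R \<subseteq> V" "V \<subseteq> closure R"
      and cont: "continuous_on D g"
      and opm: "open_map (top_of_set D) (top_of_set R) g"
      and onto: "g ` D = R"
      and U: "open U" and MG: "countable \<G>M" "\<forall>G\<in>\<G>M. dns G"
      and y: "y \<in> D" "y \<in> U" "g y \<in> U"
  shows "\<exists>z\<in>D. z \<in> U \<and> g z \<in> U \<and> z \<in> \<Inter>\<G>M \<and> g z \<in> \<Inter>\<G>M"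
proof -
  obtain \<T> where T: "countable \<T>" "\<forall>T\<in>\<T>. open T" "\<Inter>\<T> = D"
    using gd unfolding gdelta_in_alt intersection_of_def by auto
  obtain Q' where Q': "open Q'" "Q' \<inter> D = g -` U \<inter> D"
    using cont U unfolding continuous_on_open_invariant by blast
  have exC: "\<exists>C. closed C \<and> C \<inter> D = g -` (- G) \<inter> D" if "G \<in> \<G>M" for G
  proof -
    have "open G" using MG that by (auto simp: dns_def)
    then show ?thesis using cont unfolding continuous_on_closed_invariant by blast
  qed
  define C where "C G = (SOME C. closed C \<and> C \<inter> D = g -` (- G) \<inter> D)" for G
  have C: "closed (C G) \<and> C G \<inter> D = g -` (- G) \<inter> D" if "G \<in> \<G>M" for G
    using someI_ex[OF exC[OF that]] unfolding C_def by blast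
  define \<G> where "\<G> = ((\<lambda>T. T \<union> - closure Op) ` \<T>) \<union> \<G>M \<union> ((\<lambda>G. - C G \<union> - closure Op) ` \<G>M)"
  have cG: "countable \<G>" unfolding \<G>_def using T MG by auto
  have dA: "dns (T \<union> - closure Op)" if "T \<in> \<T>" for T
    unfolding dns_def
  proof (intro conjI allI impI)
    show "open (T \<union> - closure Op)" using T that by auto
    fix P :: "'a set" assume P: "open P" "P \<noteq> {}"
    show "P \<inter> (T \<union> - closure Op) \<noteq> {}"
    proof
      assume e: "P \<inter> (T \<union> - closure Op) = {}"
      then have "P \<subseteq> closure Op" by auto
      then have "P \<inter> Op \<noteq> {}" using meets_closure[OF P] by auto
      moreover have "P \<inter> Op \<subseteq> closure D" using Op by auto
      ultimately have "P \<inter> Op \<inter> D \<noteq> {}" using meets_closure[of "P \<inter> Op" D] P Op by auto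
      moreover have "D \<subseteq> T" using T that by auto
      ultimately show False using e by auto
    qed
  qed
  have dC: "dns (- C G \<union> - closure Op)" if G: "G \<in> \<G>M" for G
    unfolding dns_def
  proof (intro conjI allI impI)
    show "open (- C G \<union> - closure Op)" using C[OF G] by auto
    fix P :: "'a set" assume P: "open P" "P \<noteq> {}"
    show "P \<inter> (- C G \<union> - closure Op) \<noteq> {}"
    proof
      assume e: "P \<inter> (- C G \<union> - closure Op) = {}"
      then have "P \<subseteq> closure Op" by auto
      then have "P \<inter> Op \<noteq> {}" using meets_closure[OF P] by auto
      moreover have "P \<inter> Op \<subseteq> closure D" using Op by auto
      ultimately have W: "P \<inter> Op \<inter> D \<noteq> {}" using meets_closure[of "P \<inter> Op" D] P Op by auto
      have Wo: "openin (top_of_set D) (D \<inter> (P \<inter> Op))"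
        using P Op by (auto simp: openin_open)
      have Wsub: "g ` (D \<inter> (P \<inter> Op)) \<subseteq> - G" using e C[OF G] by auto
      have "openin (top_of_set R) (g ` (D \<inter> (P \<inter> Op)))"
        using opm Wo unfolding open_map_def by blast
      then obtain Q where Q: "open Q" "g ` (D \<inter> (P \<inter> Op)) = R \<inter> Q"
        unfolding openin_open by blast
      have "g ` (D \<inter> (P \<inter> Op)) \<noteq> {}" using W by auto
      then have "Q \<inter> V \<noteq> {}" using Q V by auto
      moreover have "open (Q \<inter> V)" using Q V by auto
      ultimately have "(Q \<inter> V) \<inter> G \<noteq> {}" using MG G unfolding dns_def by blast
      moreover have "open (Q \<inter> V \<inter> G)" using MG G Q V by (auto simp: dns_def)
      moreover have "Q \<inter> V \<inter> G \<subseteq> closure R" using V by auto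
      ultimately have "Q \<inter> V \<inter> G \<inter> R \<noteq> {}" using meets_closure by blast
      then show False using Q Wsub by auto
    qed
  qed
  have dG: "\<forall>G\<in>\<G>. dns G" unfolding \<G>_def using dA dC MG by auto
  have P0: "open (U \<inter> Q' \<inter> Op)" "U \<inter> Q' \<inter> Op \<noteq> {}"
    using U Q' Op y by auto
  obtain z where z: "z \<in> U \<inter> Q' \<inter> Op" "z \<in> \<Inter>\<G>"
    using baire[OF cG _ P0] dG by blast
  have zD: "z \<in> D"
  proof -
    have "z \<in> T" if "T \<in> \<T>" for T
    proof -
      have "T \<union> - closure Op \<in> \<G>" unfolding \<G>_def using that by blast
      then have "z \<in> T \<union> - closure Op" using z(2) by blast
      moreover have "z \<in> closure Op" using z closure_subset[of Op] by auto
      ultimately show ?thesis by auto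
    qed
    then show ?thesis using T by auto
  qed
  have gzU: "g z \<in> U" using z zD Q' by auto
  have "\<G>M \<subseteq> \<G>" unfolding \<G>_def by blast
  then have zM: "z \<in> \<Inter>\<G>M" using z(2) by blast
  have gzM: "g z \<in> \<Inter>\<G>M"
  proof
    fix G assume G: "G \<in> \<G>M"
    have "- C G \<union> - closure Op \<in> \<G>" unfolding \<G>_def using G by blast
    then have "z \<in> - C G \<union> - closure Op" using z(2) by blast
    moreover have "z \<in> closure Op" using z closure_subset[of Op] by auto
    ultimately have "z \<notin> C G" by auto
    then have "z \<notin> g -` (- G) \<inter> D" using C[OF G] by blast
    then show "g z \<in> G" using zD by blast
  qed
  have "z \<in> U" using z(1) by blast
  then show ?thesis using zD gzU zM gzM by blast
qed

theorem lemma2p1: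
  fixes D R :: "nat \<Rightarrow> 'a::polish_space set" and f :: "nat \<Rightarrow> 'a \<Rightarrow> 'a"
  assumes D_dense_Gdelta: "\<forall>n. \<exists>U. open U \<and> D n \<subseteq> U \<and> U \<subseteq> closure (D n) \<and> gdelta_in euclidean (D n)"
      and R_dense_Gdelta: "\<forall>n. \<exists>V. open V \<and> R n \<subseteq> V \<and> V \<subseteq> closure (R n) \<and> gdelta_in euclidean (R n)"
      and f_cont: "\<forall>n. continuous_on (D n) (f n)"
      and f_open: "\<forall>n. open_map (top_of_set (D n)) (top_of_set (R n)) (f n)"
      and f_onto: "\<forall>n. f n ` D n = R n"
      and diag_sub: "diag \<subseteq> closure (\<Union>n. graph_of (D n) (f n)) - (\<Union>n. graph_of (D n) (f n))"
  shows "(\<Union>n. graph_of (D n) (f n)) \<inter> diag = {} \<and>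
         \<not> (\<exists>c :: 'a \<Rightarrow> nat. c \<in> borel_measurable borel \<and>
               (\<forall>(x, y) \<in> (\<Union>n. graph_of (D n) (f n)). c x \<noteq> c y))"
proof
  define A where "A = (\<Union>n. graph_of (D n) (f n))"
  show "(\<Union>n. graph_of (D n) (f n)) \<inter> diag = {}" using diag_sub by blast
  show "\<not> (\<exists>c :: 'a \<Rightarrow> nat. c \<in> borel_measurable borel \<and>
               (\<forall>(x, y) \<in> (\<Union>n. graph_of (D n) (f n)). c x \<noteq> c y))"
  proof
    assume "\<exists>c :: 'a \<Rightarrow> nat. c \<in> borel_measurable borel \<and>
               (\<forall>(x, y) \<in> (\<Union>n. graph_of (D n) (f n)). c x \<noteq> c y)"
    then obtain c :: "'a \<Rightarrow> nat" where cm: "c \<in> borel_measurable borel"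
      and col: "\<forall>(x, y) \<in> A. c x \<noteq> c y" unfolding A_def by blast
    have "bp (c -` {k})" for k
    proof -
      have "c -` {k} \<inter> space borel \<in> sets borel" using borel_measurable_vimage[OF cm] .
      then show ?thesis using bp_sigma by (simp add: sets_borel)
    qed
    then obtain U where U: "\<And>k. open (U k) \<and> meager ((c -` {k} - U k) \<union> (U k - c -` {k}))"
      unfolding bp_def by metis
    have "\<exists>k. U k \<noteq> {}"
    proof (rule ccontr)
      assume "\<not> ?thesis"
      then have "meager (c -` {k})" for k using U[of k] by simp
      then have "meager (\<Union>k. c -` {k})" by (intro meager_Union)
      moreover have "(\<Union>k. c -` {k}) = (UNIV :: 'a set)" by auto
      ultimately obtain \<G> :: "'a set set" where "countable \<G>" "\<forall>G\<in>\<G>. dns G" "UNIV \<inter> \<Inter>\<G> = {}"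
        unfolding meager_def by auto
      then show False using baire[of \<G> UNIV] by auto
    qed
    then obtain k where k: "U k \<noteq> {}" by blast
    have "meager (U k - c -` {k})" using U[of k] meager_mono by blast
    then obtain \<G>M :: "'a set set" where MG: "countable \<G>M" "\<forall>G\<in>\<G>M. dns G"
       "(U k - c -` {k}) \<inter> \<Inter>\<G>M = {}" unfolding meager_def by auto
    obtain x where x: "x \<in> U k" using k by blast
    have "(x, x) \<in> closure A" using diag_sub unfolding A_def diag_def by auto
    moreover have "open (U k \<times> U k)" "(x, x) \<in> U k \<times> U k" using U x by (auto intro: open_Times)
    ultimately have "(U k \<times> U k) \<inter> A \<noteq> {}" using meets_closure[of "U k \<times> U k" A]
      by (metis empty_iff open_Int_closure_eq_empty IntI)
    then obtain n y where y: "y \<in> D n" "y \<in> U k" "f n y \<in> U k"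
      unfolding A_def graph_of_def by auto
    obtain Op where Op: "open Op" "D n \<subseteq> Op" "Op \<subseteq> closure (D n)" "gdelta_in euclidean (D n)"
      using D_dense_Gdelta by blast
    obtain V where V: "open V" "R n \<subseteq> V" "V \<subseteq> closure (R n)"
      using R_dense_Gdelta by blast
    obtain z where z: "z \<in> D n" "z \<in> U k" "f n z \<in> U k" "z \<in> \<Inter>\<G>M" "f n z \<in> \<Inter>\<G>M"
      using main_contra[OF Op V f_cont[rule_format, of n] f_open[rule_format, of n] f_onto[rule_format, of n] conjunct1[OF U[of k]] MG(1) MG(2) y] by blast
    have "c z = k" using z MG by auto
    moreover have "c (f n z) = k" using z MG by auto
    moreover have "(z, f n z) \<in> A" using z unfolding A_def graph_of_def by auto
    ultimately show False using col by auto
  qed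
qed

end
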